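(* Let $(f,I,U)$ be a safety verification problem that is robustly safe with robustness margin $\mu>0$, with $\overline{I}\cap\overline{U}=\emptyset$ and $\mathbb{R}^n\setminus U$ bounded, and let $V$ be a $\mu$-robust safety certificate of $(f,I,U)$. Define $\nu: R^{\mathbb{R}}_f(\partial\overline{V})\to\mathbb{R}$ by $\nu(x):=-t$, where $t$ is the unique $t\in\mathbb{R}$ with $\varphi_f(x,t)\in\partial\overline{V}$. Then there is an open neighborhood of $\partial\overline{V}$, contained in the domain of $\nu$, on which $\nu$ is continuous.
   Context: A safety verification problem is a triple $(f,I,U)$ with $f:\mathbb{R}^n\to\mathbb{R}^n$ smooth, $I,U\subseteq\mathbb{R}^n$. Convention: the flow $\varphi_f(x,t)$ of $\dot x=f(x)$ (the state reached at time $t\in\mathbb{R}$ from $x$; negative $t$ allowed) is defined for all $x$, $t$. For $X\subseteq\mathbb{R}^n$, $R^{\mathbb{R}}_f(X)=\{\varphi_f(x,t)\mid x\in X,\ t\in\mathbb{R}\}$. $\partial\overline{V}$ denotes the boundary of the closure of $V$. Under the hypotheses, for every $x\in R^{\mathbb{R}}_f(\partial\overline{V})$ there is exactly one $t\in\mathbb{R}$ with $\varphi_f(x,t)\in\partial\overline{V}$, so $\nu$ is well defined. For $\varepsilon\ge 0$, an $\varepsilon$-solution of $\dot x=f(x)$ is a differentiable function $x:\mathbb{R}^{\ge0}\to\mathbb{R}^n$ with $\|f(x(t))-\dot x(t)\|\le\varepsilon$ for all $t\ge0$. For $X\subseteq\mathbb{R}^n$, $T\subseteq\mathbb{R}^{\ge0}$: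 $R^{T}_{f,\varepsilon}(X)=\{x(t)\mid t\in T,\ x\text{ an }\varepsilon\text{-solution with }x(0)\in X\}$, $R_{f,\varepsilon}(X)=R^{\mathbb{R}^{\ge0}}_{f,\varepsilon}(X)$. Robustly safe with robustness margin $\mu>0$ means $R_{f,\mu}(I)\cap U=\emptyset$. A $\mu$-robust safety certificate is a set $V$ with $I\subseteq V$, $R_{f,\mu}(V)\subseteq V$, $V\cap U=\emptyset$. *)

theory Defs
  imports "HOL-Analysis.Analysis"
begin

text \<open>Smoothness (C-infinity): all iterated (Frechet) directional derivatives exist
  everywhere. D vs is the iterated derivative in the directions listed in vs.\<close>
definition smooth_fun :: "('a::real_normed_vector \<Rightarrow> 'b::real_normed_vector) \<Rightarrow> bool" where
  "smooth_fun f \<longleftrightarrow> (\<exists>D :: 'a list \<Rightarrow> 'a \<Rightarrow> 'b. D [] = f \<and>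
      (\<forall>vs x. (D vs has_derivative (\<lambda>v. D (v # vs) x)) (at x)))"

definition is_flow :: "('a::real_normed_vector \<Rightarrow> 'a) \<Rightarrow> ('a \<Rightarrow> real \<Rightarrow> 'a) \<Rightarrow> bool" where
  "is_flow f phi \<longleftrightarrow> (\<forall>x. phi x 0 = x) \<and>
      (\<forall>x t. ((\<lambda>s. phi x s) has_vector_derivative f (phi x t)) (at t))"

text \<open>R^R_f(X): states reachable forwards or backwards in time.\<close>
definition flow_reach :: "('a \<Rightarrow> real \<Rightarrow> 'a) \<Rightarrow> 'a set \<Rightarrow> 'a set" where
  "flow_reach phi X = {phi x t | x t. x \<in> X}"

definition eps_solution :: "('a::real_normed_vector \<Rightarrow> 'a) \<Rightarrow> real \<Rightarrow> (real \<Rightarrow> 'a) \<Rightarrow> bool" where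
  "eps_solution f eps x \<longleftrightarrow> (\<exists>x'. \<forall>t\<ge>0. (x has_vector_derivative x' t) (at t within {0..}) \<and>
      norm (f (x t) - x' t) \<le> eps)"

definition reach_eps :: "('a::real_normed_vector \<Rightarrow> 'a) \<Rightarrow> real \<Rightarrow> 'a set \<Rightarrow> 'a set" where
  "reach_eps f eps X = {x t | x t. t \<ge> 0 \<and> eps_solution f eps x \<and> x 0 \<in> X}"

definition robustly_safe :: "('a::real_normed_vector \<Rightarrow> 'a) \<Rightarrow> 'a set \<Rightarrow> 'a set \<Rightarrow> real \<Rightarrow> bool" where
  "robustly_safe f I U mu \<longleftrightarrow> mu > 0 \<and> reach_eps f mu I \<inter> U = {}"

definition robust_certificate :: "('a::real_normed_vector \<Rightarrow> 'a) \<Rightarrow> 'a set \<Rightarrow> 'a set \<Rightarrow> real \<Rightarrow> 'a set \<Rightarrow> bool" where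
  "robust_certificate f I U mu V \<longleftrightarrow> I \<subseteq> V \<and> reach_eps f mu V \<subseteq> V \<and> V \<inter> U = {}"

definition nu :: "('a::topological_space \<Rightarrow> real \<Rightarrow> 'a) \<Rightarrow> 'a set \<Rightarrow> 'a \<Rightarrow> real" where
  "nu phi V x = - (THE t. phi x t \<in> frontier (closure V))"

end

theory Submission
  imports Defs
begin



lemma smooth_lipschitz:
  fixes f :: "real^'n \<Rightarrow> real^'n"
  assumes "smooth_fun f" "compact K"
  shows "\<exists>L. \<forall>a\<in>K. \<forall>b\<in>K. norm (f a - f b) \<le> L * norm (a - b)"
proof -
  obtain D :: "(real^'n) list \<Rightarrow> real^'n \<Rightarrow> real^'n" where D0: "D [] = f"
    and DD: "\<And>vs x. (D vs has_derivative (\<lambda>v. D (v # vs) x)) (at x)"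
    using assms(1) unfolding smooth_fun_def by blast
  have fd: "(f has_derivative (\<lambda>v. D [v] x)) (at x)" for x using DD[of "[]" x] D0 by simp
  have bl: "bounded_linear (\<lambda>v. D [v] x)" for x using fd has_derivative_bounded_linear by blast
  define F where "F x = Blinfun (\<lambda>v. D [v] x)" for x
  have Fa: "blinfun_apply (F x) = (\<lambda>v. D [v] x)" for x
    unfolding F_def using bl bounded_linear_Blinfun_apply by blast
  have contD: "continuous (at x) (D vs)" for vs x
    using DD[of vs x] has_derivative_continuous by blast
  have contF: "continuous (at x) F" for x
    by (rule continuous_blinfun_componentwiseI1) (simp add: Fa contD)
  obtain R where R: "R > 0" "K \<subseteq> cball 0 R"
    using compact_imp_bounded[OF assms(2)] bounded_subset_cball by (metis bounded_pos subsetI mem_cball_0)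
  have "continuous_on (cball 0 R) (\<lambda>x. norm (F x))"
    by (intro continuous_at_imp_continuous_on ballI continuous_intros contF)
  then have "bounded ((\<lambda>x. norm (F x)) ` cball 0 R)"
    by (intro compact_imp_bounded compact_continuous_image) auto
  then obtain B where B0: "\<forall>x\<in>cball 0 R. norm (F x) \<le> B"
    by (auto simp: bounded_iff)
  have B: "\<And>x. x \<in> cball 0 R \<Longrightarrow> norm (F x) \<le> B" using B0 by blast
  have "norm (f a - f b) \<le> B * norm (a - b)" if "a \<in> K" "b \<in> K" for a b
  proof (rule differentiable_bound[where S="cball 0 R" and f'="\<lambda>x v. D [v] x"])
    show "convex (cball (0::real^'n) R)" by simp
    show "(f has_derivative (\<lambda>v. D [v] x)) (at x within cball 0 R)" for x
      using fd has_derivative_at_withinI by blast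
    show "onorm (\<lambda>v. D [v] x) \<le> B" if "x \<in> cball 0 R" for x
      using B[OF that] by (simp add: norm_blinfun.rep_eq Fa)
  qed (use that R in auto)
  then show ?thesis by blast
qed




lemma gronwall_sq:
  fixes u w :: "real \<Rightarrow> 'a::real_inner" and g :: "'a \<Rightarrow> 'a"
  assumes du: "\<And>t. (u has_vector_derivative g (u t)) (at t)"
    and dw: "\<And>t. (w has_vector_derivative g (w t)) (at t)"
    and s: "0 \<le> s" and L: "0 \<le> L"
    and lip: "\<And>r. 0 \<le> r \<Longrightarrow> r \<le> s \<Longrightarrow> norm (g (u r) - g (w r)) \<le> L * norm (u r - w r)"
  shows "(norm (u s - w s)) ^ 2 \<le> (norm (u 0 - w 0)) ^ 2 * exp (2 * L * s)"
proof -
  define d where "d r = u r - w r" for r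
  define d' where "d' r = g (u r) - g (w r)" for r
  have dd: "(d has_derivative (\<lambda>h. h  *\<^sub>R d' r)) (at r)" for r
    unfolding d_def d'_def using has_vector_derivative_diff[OF du dw]
    by (simp add: has_vector_derivative_def scaleR_diff_right)
  define h where "h r = exp (-2 * L * r) * (d r \<bullet> d r)" for r
  have hd: "(h has_real_derivative exp (-2 * L * r) * (-2 * L) * (d r \<bullet> d r) + exp (-2 * L * r) * (2 * (d r \<bullet> d' r))) (at r)" for r
  proof -
    have i: "((\<lambda>r. d r \<bullet> d r) has_real_derivative 2 * (d r \<bullet> d' r)) (at r)"
      unfolding has_field_derivative_def
      by (rule has_derivative_eq_rhs[OF has_derivative_inner[OF dd dd]])
         (auto simp: inner_commute algebra_simps fun_eq_iff)
    have e: "((\<lambda>r. exp (-2 * L * r)) has_real_derivative exp (-2 * L * r) * (-2 * L)) (at r)"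
      by (auto intro!: derivative_eq_intros)
    show ?thesis unfolding h_def using DERIV_mult[OF e i] by (simp add: algebra_simps)
  qed
  have "h s \<le> h 0"
  proof (rule DERIV_nonpos_imp_nonincreasing[OF s])
    fix r assume r: "0 \<le> r" "r \<le> s"
    have "d r \<bullet> d' r \<le> norm (d r) * norm (d' r)" by (rule norm_cauchy_schwarz)
    also have "\<dots> \<le> norm (d r) * (L * norm (d r))"
      using lip[OF r] unfolding d_def d'_def by (simp add: mult_left_mono)
    finally have "d r \<bullet> d' r \<le> L * (d r \<bullet> d r)" by (simp add: power2_norm_eq_inner[symmetric] power2_eq_square algebra_simps)
    then have "exp (-2 * L * r) * (-2 * L) * (d r \<bullet> d r) + exp (-2 * L * r) * (2 * (d r \<bullet> d' r)) \<le> 0"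
      by (simp add: algebra_simps)
    then show "\<exists>y. (h has_real_derivative y) (at r) \<and> y \<le> 0" using hd by blast
  qed
  then have "exp (-2 * L * s) * (norm (d s)) ^ 2 \<le> (norm (d 0)) ^ 2"
    by (simp add: h_def power2_norm_eq_inner)
  then have "(norm (d s)) ^ 2 \<le> (norm (d 0)) ^ 2 * exp (2 * L * s)"
    by (simp add: exp_minus field_simps mult_exp_exp)
  then show ?thesis by (simp add: d_def)
qed




lemma cont_dep:
  fixes g :: "real^'n \<Rightarrow> real^'n" and w :: "real \<Rightarrow> real^'n"
  assumes lipg: "\<And>K. compact K \<Longrightarrow> \<exists>L. \<forall>a\<in>K. \<forall>b\<in>K. norm (g a - g b) \<le> L * norm (a - b)"
    and dw: "\<And>t. (w has_vector_derivative g (w t)) (at t)"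
    and T: "0 \<le> T" and e: "e > 0"
  shows "\<exists>\<delta>>0. \<forall>u. (\<forall>t. (u has_vector_derivative g (u t)) (at t)) \<and> norm (u 0 - w 0) < \<delta>
            \<longrightarrow> (\<forall>t\<in>{0..T}. norm (u t - w t) < e)"
proof -
  have cw: "continuous_on UNIV w"
    using dw by (meson continuous_at_imp_continuous_on has_vector_derivative_continuous)
  have "bounded (w ` {0..T})"
    by (intro compact_imp_bounded compact_continuous_image continuous_on_subset[OF cw]) auto
  then obtain R where R0: "\<forall>t\<in>{0..T}. norm (w t) \<le> R"
    by (auto simp: bounded_iff)
  have R: "\<And>t. t \<in> {0..T} \<Longrightarrow> norm (w t) \<le> R" using R0 by blast
  obtain L0 where L0: "\<forall>a\<in>cball 0 (R+1). \<forall>b\<in>cball 0 (R+1). norm (g a - g b) \<le> L0 * norm (a - b)"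
    using lipg[of "cball 0 (R+1)"] by auto
  define L where "L = max L0 0"
  have L: "0 \<le> L" "\<And>a b. a \<in> cball 0 (R+1) \<Longrightarrow> b \<in> cball 0 (R+1) \<Longrightarrow> norm (g a - g b) \<le> L * norm (a - b)"
  proof -
    show "0 \<le> L" unfolding L_def by simp
    fix a b :: "real^'n" assume "a \<in> cball 0 (R+1)" "b \<in> cball 0 (R+1)"
    then have "norm (g a - g b) \<le> L0 * norm (a - b)" using L0 by blast
    also have "\<dots> \<le> L * norm (a - b)" unfolding L_def by (intro mult_right_mono) auto
    finally show "norm (g a - g b) \<le> L * norm (a - b)" .
  qed
  define M where "M = exp (L * T)"
  have M: "1 \<le> M" unfolding M_def using L T by simp
  define \<delta> where "\<delta> = min 1 e / (2 * M)"
  have \<delta>: "\<delta> > 0" "\<delta> * M < 1" "\<delta> * M < e" "\<delta> \<le> 1"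
    using M e unfolding \<delta>_def by (auto simp: field_simps min_def)
  {
    fix u :: "real \<Rightarrow> real^'n"
    assume du: "\<And>t. (u has_vector_derivative g (u t)) (at t)" and u0: "norm (u 0 - w 0) < \<delta>"
    have cu: "continuous_on UNIV u"
      using du by (meson continuous_at_imp_continuous_on has_vector_derivative_continuous)
    have cd: "continuous_on UNIV (\<lambda>t. norm (u t - w t))"
      by (intro continuous_intros cu cw)
    have gr: "(norm (u s - w s)) ^ 2 \<le> (\<delta> * M) ^ 2"
      if s: "0 \<le> s" "s \<le> T" and b: "\<And>r. 0 \<le> r \<Longrightarrow> r \<le> s \<Longrightarrow> norm (u r - w r) \<le> 1" for s
    proof -
      have "(norm (u s - w s)) ^ 2 \<le> (norm (u 0 - w 0)) ^ 2 * exp (2 * L * s)"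
      proof (rule gronwall_sq[OF du dw s(1) L(1)])
        fix r assume r: "0 \<le> r" "r \<le> s"
        have wr: "norm (w r) \<le> R" using R r s by auto
        have "norm (u r) \<le> norm (w r) + norm (u r - w r)" by (metis add.commute norm_triangle_sub)
        then have "norm (u r) \<le> R + 1" using wr b[OF r] by linarith
        then show "norm (g (u r) - g (w r)) \<le> L * norm (u r - w r)"
          using L(2) wr by simp
      qed
      also have "\<dots> \<le> \<delta> ^ 2 * M ^ 2"
      proof (rule mult_mono)
        show "(norm (u 0 - w 0)) ^ 2 \<le> \<delta> ^ 2" using u0 by (simp add: power_mono)
        have "exp (2 * L * s) \<le> exp (2 * L * T)" using L s by (simp add: mult_left_mono)
        also have "\<dots> = M ^ 2" unfolding M_def by (simp add: power2_eq_square mult_exp_exp)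
        finally show "exp (2 * L * s) \<le> M ^ 2" .
      qed auto
      finally show ?thesis by (simp add: power_mult_distrib)
    qed
    have lt1: "\<forall>t\<in>{0..T}. norm (u t - w t) < 1"
    proof (rule ccontr)
      assume nt: "\<not> (\<forall>t\<in>{0..T}. norm (u t - w t) < 1)"
      define S where "S = {0..T} \<inter> {t. 1 \<le> norm (u t - w t)}"
      have Sne: "S \<noteq> {}" using nt unfolding S_def by force
      have Scl: "closed S" unfolding S_def
        by (intro closed_Int closed_atLeastAtMost closed_Collect_le continuous_on_const cd)
      define s1 where "s1 = Inf S"
      have bdd: "bdd_below S" unfolding S_def by (auto intro: bdd_belowI[of _ 0])
      have s1S: "s1 \<in> S" unfolding s1_def by (rule closed_contains_Inf[OF Sne bdd Scl])
      have below: "norm (u r - w r) < 1" if "0 \<le> r" "r < s1" for r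
      proof -
        have "r \<notin> S" using that cInf_lower[OF _ bdd] unfolding s1_def by force
        moreover have "r \<le> T" using that s1S unfolding S_def by auto
        ultimately show ?thesis using that unfolding S_def by auto
      qed
      have s1pos: "0 < s1"
      proof (rule ccontr)
        assume "\<not> 0 < s1"
        then have "s1 = 0" using s1S unfolding S_def by auto
        then show False using s1S u0 \<delta>(4) unfolding S_def by auto
      qed
      have cl: "closed {r. norm (u r - w r) \<le> 1}"
        by (intro closed_Collect_le continuous_on_const cd)
      have "{0..<s1} \<subseteq> {r. norm (u r - w r) \<le> 1}" using below by fastforce
      then have "closure {0..<s1} \<subseteq> {r. norm (u r - w r) \<le> 1}"
        using cl closure_minimal by blast
      then have le1: "norm (u r - w r) \<le> 1" if "0 \<le> r" "r \<le> s1" for r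
        using that s1pos by (auto simp: closure_atLeastLessThan)
      have "(norm (u s1 - w s1)) ^ 2 \<le> (\<delta> * M) ^ 2"
        using gr[of s1] le1 s1S unfolding S_def by auto
      moreover have "1 \<le> norm (u s1 - w s1)" using s1S unfolding S_def by auto
      ultimately have "1 \<le> \<delta> * M"
        by (smt (verit) \<delta>(1) M power2_le_imp_le mult_pos_pos)
      then show False using \<delta>(2) by simp
    qed
    have "\<forall>t\<in>{0..T}. norm (u t - w t) < e"
    proof
      fix t assume t: "t \<in> {0..T}"
      have "(norm (u t - w t)) ^ 2 \<le> (\<delta> * M) ^ 2"
      proof (rule gr)
        show "0 \<le> t" "t \<le> T" using t by auto
        fix r assume "0 \<le> r" "r \<le> t"
        then have "r \<in> {0..T}" using t by auto
        from lt1[rule_format, OF this] show "norm (u r - w r) \<le> 1" by simp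
      qed
      then have "norm (u t - w t) \<le> \<delta> * M"
      proof (rule power2_le_imp_le)
        show "0 \<le> \<delta> * M" using \<delta>(1) M by simp
      qed
      then show "norm (u t - w t) < e" using \<delta>(3) by simp
    qed
  }
  then show ?thesis using \<delta>(1) by blast
qed




lemma uniq:
  fixes g :: "real^'n \<Rightarrow> real^'n" and u w :: "real \<Rightarrow> real^'n"
  assumes lipg: "\<And>K. compact K \<Longrightarrow> \<exists>L. \<forall>a\<in>K. \<forall>b\<in>K. norm (g a - g b) \<le> L * norm (a - b)"
    and du: "\<And>t. (u has_vector_derivative g (u t)) (at t)"
    and dw: "\<And>t. (w has_vector_derivative g (w t)) (at t)"
    and eq: "u 0 = w 0" and t: "0 \<le> t"
  shows "u t = w t"
proof (rule ccontr)
  assume ne: "u t \<noteq> w t"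
  define e where "e = norm (u t - w t)"
  have e: "e > 0" using ne unfolding e_def by simp
  obtain \<delta> where d: "\<delta> > 0" and H: "\<forall>u. (\<forall>t. (u has_vector_derivative g (u t)) (at t)) \<and> norm (u 0 - w 0) < \<delta>
            \<longrightarrow> (\<forall>t\<in>{0..t}. norm (u t - w t) < e)"
    using cont_dep[OF lipg dw t e] by blast
  have "norm (u t - w t) < e" using H[rule_format, of u t] du eq d t by auto
  then show False unfolding e_def by simp
qed

locale flowctx =
  fixes f :: "real^'n \<Rightarrow> real^'n" and phi :: "real^'n \<Rightarrow> real \<Rightarrow> real^'n"
  assumes sm: "smooth_fun f" and fl: "is_flow f phi"
begin

lemma lipf: "compact K \<Longrightarrow> \<exists>L. \<forall>a\<in>K. \<forall>b\<in>K. norm (f a - f b) \<le> L * norm (a - b)"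
  using smooth_lipschitz[OF sm] by blast

lemma lipn: "compact K \<Longrightarrow> \<exists>L. \<forall>a\<in>K. \<forall>b\<in>K. norm ((\<lambda>x. - f x) a - (\<lambda>x. - f x) b) \<le> L * norm (a - b)"
proof -
  assume "compact K"
  then obtain L where "\<forall>a\<in>K. \<forall>b\<in>K. norm (f a - f b) \<le> L * norm (a - b)" using lipf by blast
  then show ?thesis by (metis minus_diff_eq norm_minus_cancel diff_minus_eq_add uminus_add_conv_diff)
qed

lemma phi0[simp]: "phi x 0 = x" using fl unfolding is_flow_def by blast

lemma dphi: "(phi x has_vector_derivative f (phi x t)) (at t)"
  using fl unfolding is_flow_def by auto

lemma dcomp:
  assumes "((\<lambda>r. a + c * r) has_vector_derivative c) (at r)"
  shows "((\<lambda>r. phi x (a + c * r)) has_vector_derivative c *\<^sub>R f (phi x (a + c * r))) (at r)"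
  using vector_diff_chain_at[OF assms dphi] by (simp add: o_def)

lemma dlin: "((\<lambda>r. a + c * r) has_vector_derivative c) (at r)"
  for a c :: real
  by (auto intro!: derivative_eq_intros simp: has_real_derivative_iff_has_vector_derivative[symmetric])

lemma dshift: "((\<lambda>r. phi x (s + r)) has_vector_derivative f (phi x (s + r))) (at r)"
  using dcomp[OF dlin[where a=s and c=1 and r=r], where x=x] by simp

lemma dshiftn: "((\<lambda>r. phi x (s - r)) has_vector_derivative (\<lambda>x. - f x) (phi x (s - r))) (at r)"
  using dcomp[OF dlin[where a=s and c="-1" and r=r], where x=x] by simp

lemma group: "phi (phi x s) t = phi x (s + t)"
proof (cases "0 \<le> t")
  case True
  have "(\<lambda>r. phi (phi x s) r) t = (\<lambda>r. phi x (s + r)) t"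
    by (rule uniq[OF lipf dphi dshift]) (simp_all add: True)
  then show ?thesis by simp
next
  case False
  have "(\<lambda>r. phi (phi x s) (0 - r)) (-t) = (\<lambda>r. phi x (s - r)) (-t)"
    by (rule uniq[OF lipn dshiftn dshiftn]) (use False in simp_all)
  then show ?thesis by simp
qed

lemma unif:
  assumes "0 \<le> T" "e > 0"
  shows "\<exists>\<delta>>0. \<forall>x. norm (x - x0) < \<delta> \<longrightarrow> (\<forall>s\<in>{0..T}. norm (phi x s - phi x0 s) < e)"
proof -
  obtain \<delta> where d: "\<delta> > 0" and H: "\<forall>u. (\<forall>t. (u has_vector_derivative f (u t)) (at t)) \<and> norm (u 0 - phi x0 0) < \<delta>
            \<longrightarrow> (\<forall>t\<in>{0..T}. norm (u t - phi x0 t) < e)"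
    using cont_dep[OF lipf dphi assms] by blast
  show ?thesis using d H dphi by (intro exI[of _ \<delta>]) auto
qed

lemma unifn:
  assumes "0 \<le> T" "e > 0"
  shows "\<exists>\<delta>>0. \<forall>x. norm (x - x0) < \<delta> \<longrightarrow> (\<forall>s\<in>{0..T}. norm (phi x (0 - s) - phi x0 (0 - s)) < e)"
proof -
  obtain \<delta> where d: "\<delta> > 0" and H: "\<forall>u. (\<forall>t. (u has_vector_derivative (\<lambda>x. - f x) (u t)) (at t)) \<and> norm (u 0 - phi x0 (0 - 0)) < \<delta>
            \<longrightarrow> (\<forall>t\<in>{0..T}. norm (u t - phi x0 (0 - t)) < e)"
    using cont_dep[OF lipn dshiftn assms, of x0 0] by blast
  show ?thesis
  proof (intro exI[of _ \<delta>] conjI allI impI ballI d)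
    fix x s assume x: "norm (x - x0) < \<delta>" and s: "s \<in> {0..T}"
    have "norm ((\<lambda>r. phi x (0 - r)) s - phi x0 (0 - s)) < e"
    proof -
      have d: "\<forall>t. ((\<lambda>r. phi x (0 - r)) has_vector_derivative - f (phi x (0 - t))) (at t)"
        using dshiftn by blast
      show ?thesis using H[rule_format, of "\<lambda>r. phi x (0 - r)" s, OF conjI[OF d]] x s by simp
    qed
    then show "norm (phi x (0 - s) - phi x0 (0 - s)) < e" by simp
  qed
qed

lemma cont_x: "continuous (at x0) (\<lambda>x. phi x t)"
proof -
  have "\<exists>\<delta>>0. \<forall>x. dist x x0 < \<delta> \<longrightarrow> dist (phi x t) (phi x0 t) < e" if e: "e > 0" for e
  proof (cases "0 \<le> t")
    case True
    then show ?thesis using unif[OF True e, of x0] by (auto simp: dist_norm)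
  next
    case False
    then obtain \<delta> where "\<delta> > 0" "\<forall>x. norm (x - x0) < \<delta> \<longrightarrow> (\<forall>s\<in>{0..-t}. norm (phi x (0 - s) - phi x0 (0 - s)) < e)"
      using unifn[of "-t" e x0] e by auto
    moreover have "\<forall>x. dist x x0 < \<delta> \<longrightarrow> dist (phi x t) (phi x0 t) < e"
    proof (intro allI impI)
      fix x assume "dist x x0 < \<delta>"
      then have "norm (phi x (0 - (-t)) - phi x0 (0 - (-t))) < e"
        using calculation(2)[rule_format, of x "-t"] False by (auto simp: dist_norm)
      then show "dist (phi x t) (phi x0 t) < e" by (simp add: dist_norm)
    qed
    ultimately show ?thesis by blast
  qed
  then show ?thesis unfolding continuous_at_eps_delta by blast
qed

lemma cont_t: "continuous_on UNIV (phi x)"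
  using dphi by (meson continuous_at_imp_continuous_on has_vector_derivative_continuous)

end



definition gg :: "real \<Rightarrow> real \<Rightarrow> real" where
  "gg T s = (if s \<in> {..T} then (1 - s / T) ^ 2 else 0)"
definition gg' :: "real \<Rightarrow> real \<Rightarrow> real" where
  "gg' T s = (if s \<in> {..T} then - 2 * (1 - s / T) / T else 0)"

lemma gg_deriv:
  assumes T: "T > 0"
  shows "(gg T has_field_derivative gg' T s) (at s)"
proof -
  have "((\<lambda>s. if s \<in> {..T} then (1 - s / T) ^ 2 else 0) has_vector_derivative
      (if s \<in> {..T} then - 2 * (1 - s / T) / T else 0)) (at s within UNIV)"
  proof (rule has_vector_derivative_If_within_closures[where T="{T<..}"])
    show "s \<in> {..T} \<union> {T<..}" by auto
    show "UNIV = {..T} \<union> {T<..}" by auto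
    have "((\<lambda>s. (1 - s / T) ^ 2) has_real_derivative - 2 * (1 - s / T) / T) (at s)" for s
      using T by (auto intro!: derivative_eq_intros simp: field_simps) algebra
    then show "((\<lambda>s. (1 - s / T) ^ 2) has_vector_derivative - 2 * (1 - s / T) / T)
        (at s within {..T} \<union> (closure {..T} \<inter> closure {T<..}))"
      by (simp add: has_real_derivative_iff_has_vector_derivative[symmetric] has_field_derivative_at_within)
    show "((\<lambda>s. 0::real) has_vector_derivative 0) (at s within {T<..} \<union> (closure {..T} \<inter> closure {T<..}))"
      by (rule has_vector_derivative_const)
    show "s \<in> closure {..T} \<Longrightarrow> s \<in> closure {T<..} \<Longrightarrow> (1 - s / T) ^ 2 = 0" using T by auto
    show "s \<in> closure {..T} \<Longrightarrow> s \<in> closure {T<..} \<Longrightarrow> - 2 * (1 - s / T) / T = 0" using T by auto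
  qed
  then show ?thesis
    by (simp add: gg_def[abs_def] gg'_def has_real_derivative_iff_has_vector_derivative)
qed

lemma gg_bounds:
  assumes T: "T > 0" and s: "0 \<le> s"
  shows "\<bar>gg T s\<bar> \<le> 1" "\<bar>gg' T s\<bar> \<le> 2 / T" "gg T 0 = 1" "gg T T = 0" "T < s \<Longrightarrow> gg T s = 0 \<and> gg' T s = 0"
proof -
  show "gg T 0 = 1" "gg T T = 0" using T by (auto simp: gg_def)
  show "T < s \<Longrightarrow> gg T s = 0 \<and> gg' T s = 0" by (auto simp: gg_def gg'_def)
  show "\<bar>gg T s\<bar> \<le> 1"
  proof (cases "s \<le> T")
    case True
    then have "0 \<le> 1 - s / T" "1 - s / T \<le> 1" using T s by (auto simp: field_simps)
    then have "(1 - s / T) ^ 2 \<le> 1" by (simp add: power_le_one)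
    then show ?thesis using True by (simp add: gg_def)
  qed (simp add: gg_def)
  show "\<bar>gg' T s\<bar> \<le> 2 / T"
  proof (cases "s \<le> T")
    case True
    then have a: "0 \<le> 1 - s / T" "1 - s / T \<le> 1" using T s by (auto simp: field_simps)
    have "\<bar>- 2 * (1 - s / T) / T\<bar> = 2 * (1 - s / T) / T" 
    proof -
      have nn: "0 \<le> 2 * (1 - s / T) / T" using a T by (intro divide_nonneg_pos mult_nonneg_nonneg) auto
      have "- 2 * (1 - s / T) / T = - (2 * (1 - s / T) / T)" using T by (simp add: field_simps)
      then show ?thesis using nn by (metis abs_minus_cancel abs_of_nonneg)
    qed
    also have "\<dots> \<le> 2 / T" using a T by (simp add: divide_right_mono)
    finally show ?thesis using True by (simp add: gg'_def)
  qed (use T in \<open>simp add: gg'_def\<close>)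
qed




locale mainctx = flowctx f phi for f :: "real^'n \<Rightarrow> real^'n" and phi +
  fixes V :: "(real^'n) set" and mu :: real
  assumes mu: "mu > 0" and inv: "reach_eps f mu V \<subseteq> V"
begin

lemma robust_reach:
  assumes T: "T > 0"
  shows "\<exists>\<delta>>0. \<forall>x y. norm (x - x0) < \<delta> \<longrightarrow> norm (y - x) < \<delta> \<longrightarrow> y \<in> V \<longrightarrow> phi x T \<in> V"
proof -
  have "bounded (phi x0 ` {0..T})"
    by (intro compact_imp_bounded compact_continuous_image continuous_on_subset[OF cont_t]) auto
  then obtain R0 where R00: "\<forall>t\<in>{0..T}. norm (phi x0 t) \<le> R0" by (auto simp: bounded_iff)
  have R0: "\<And>t. t \<in> {0..T} \<Longrightarrow> norm (phi x0 t) \<le> R0" using R00 by blast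
  obtain L0 where L0: "\<forall>a\<in>cball 0 (R0+2). \<forall>b\<in>cball 0 (R0+2). norm (f a - f b) \<le> L0 * norm (a - b)"
    using lipf[of "cball 0 (R0+2)"] by auto
  define L where "L = max L0 0"
  have L: "0 \<le> L" "\<And>a b. a \<in> cball 0 (R0+2) \<Longrightarrow> b \<in> cball 0 (R0+2) \<Longrightarrow> norm (f a - f b) \<le> L * norm (a - b)"
  proof -
    show "0 \<le> L" unfolding L_def by simp
    fix a b :: "real^'n" assume "a \<in> cball 0 (R0+2)" "b \<in> cball 0 (R0+2)"
    then have "norm (f a - f b) \<le> L0 * norm (a - b)" using L0 by blast
    also have "\<dots> \<le> L * norm (a - b)" unfolding L_def by (intro mult_right_mono) auto
    finally show "norm (f a - f b) \<le> L * norm (a - b)" .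
  qed
  obtain \<delta>1 where d1: "\<delta>1 > 0" "\<forall>x. norm (x - x0) < \<delta>1 \<longrightarrow> (\<forall>s\<in>{0..T}. norm (phi x s - phi x0 s) < 1)"
    using unif[of T 1 x0] T by auto
  define \<delta> where "\<delta> = min \<delta>1 (min 1 (mu / (L + 2 / T)))"
  have LT: "L + 2 / T > 0" using L T by (simp add: add_nonneg_pos)
  have \<delta>: "\<delta> > 0" "\<delta> \<le> \<delta>1" "\<delta> \<le> 1" "\<delta> * (L + 2 / T) \<le> mu"
  proof -
    have m: "mu / (L + 2 / T) > 0" using mu LT by simp
    show "\<delta> > 0" "\<delta> \<le> \<delta>1" "\<delta> \<le> 1" using d1 m unfolding \<delta>_def by auto
    have "\<delta> \<le> mu / (L + 2 / T)" unfolding \<delta>_def by auto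
    then have "\<delta> * (L + 2 / T) \<le> mu / (L + 2 / T) * (L + 2 / T)" using LT by (intro mult_right_mono) auto
    also have "\<dots> = mu" using LT by simp
    finally show "\<delta> * (L + 2 / T) \<le> mu" .
  qed
  {
    fix x y assume x: "norm (x - x0) < \<delta>" and y: "norm (y - x) < \<delta>" and yV: "y \<in> V"
    define z where "z s = phi x s + gg T s *\<^sub>R (y - x)" for s
    define z' where "z' s = f (phi x s) + gg' T s *\<^sub>R (y - x)" for s
    have dz: "(z has_vector_derivative z' s) (at s)" for s
      unfolding z_def[abs_def] z'_def
      by (rule has_vector_derivative_eq_rhs[OF has_vector_derivative_add[OF dphi
           has_vector_derivative_scaleR[OF gg_deriv[OF T] has_vector_derivative_const]]]) simp
    have err: "norm (f (z s) - z' s) \<le> mu" if s: "0 \<le> s" for s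
    proof (cases "s \<le> T")
      case False
      then show ?thesis using gg_bounds(5)[OF T s] mu by (simp add: z_def z'_def)
    next
      case True
      have px: "norm (phi x s - phi x0 s) < 1" using d1(2) x \<delta>(2) s True by auto
      have "norm (phi x s) \<le> norm (phi x0 s) + norm (phi x s - phi x0 s)"
        by (metis add.commute norm_triangle_sub)
      then have n1: "norm (phi x s) \<le> R0 + 1" using px R0[of s] s True by simp
      have gb: "\<bar>gg T s\<bar> \<le> 1" "\<bar>gg' T s\<bar> \<le> 2 / T" using gg_bounds[OF T s] by auto
      have ny: "norm (y - x) \<le> 1" using y \<delta>(3) by simp
      have "norm (gg T s *\<^sub>R (y - x)) \<le> 1" using gb ny by (simp add: mult_le_one)
      then have n2: "norm (z s) \<le> R0 + 2" unfolding z_def using n1 norm_triangle_ineq[of "phi x s" "gg T s *\<^sub>R (y - x)"] by simp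
      have "f (z s) - z' s = (f (z s) - f (phi x s)) - gg' T s *\<^sub>R (y - x)"
        by (simp add: z'_def)
      then have "norm (f (z s) - z' s) \<le> norm (f (z s) - f (phi x s)) + norm (gg' T s *\<^sub>R (y - x))"
        by (metis norm_triangle_ineq4)
      moreover have "norm (f (z s) - f (phi x s)) \<le> L * norm (y - x)"
      proof -
        have "norm (f (z s) - f (phi x s)) \<le> L * norm (z s - phi x s)"
          using L(2) n1 n2 by simp
        moreover have "norm (z s - phi x s) = \<bar>gg T s\<bar> * norm (y - x)" by (simp add: z_def)
        moreover have "\<bar>gg T s\<bar> * norm (y - x) \<le> norm (y - x)"
          using gb(1) by (intro mult_left_le_one_le) auto
        ultimately show ?thesis using L(1) by (metis mult_left_mono order_trans)
      qed
      moreover have "norm (gg' T s *\<^sub>R (y - x)) \<le> 2 / T * norm (y - x)"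
        using gb(2) mult_right_mono[OF gb(2) norm_ge_zero[of "y - x"]] by simp
      ultimately have "norm (f (z s) - z' s) \<le> (L + 2 / T) * norm (y - x)"
        by (simp only: distrib_right)
      also have "\<dots> \<le> (L + 2 / T) * \<delta>" using y LT by (intro mult_left_mono) auto
      also have "\<dots> \<le> mu" using \<delta>(4) by (simp add: mult.commute)
      finally show ?thesis .
    qed
    have "eps_solution f mu z"
      unfolding eps_solution_def
    proof (intro exI[of _ z'] allI impI conjI)
      fix t :: real assume "0 \<le> t"
      show "(z has_vector_derivative z' t) (at t within {0..})"
        using dz by (rule has_vector_derivative_at_within)
      show "norm (f (z t) - z' t) \<le> mu" using err \<open>0 \<le> t\<close> by blast
    qed
    moreover have "z 0 = y" using gg_bounds(3)[OF T, of 0] by (simp add: z_def)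
    moreover have "z T = phi x T" using gg_bounds(4)[OF T, of 0] by (simp add: z_def)
    ultimately have "\<exists>zz t. phi x T = zz t \<and> t \<ge> 0 \<and> eps_solution f mu zz \<and> zz 0 \<in> V"
      using yV T by (intro exI[of _ z] exI[of _ T]) auto
    then have "phi x T \<in> reach_eps f mu V"
      unfolding reach_eps_def by blast
    then have "phi x T \<in> V" using inv by blast
  }
  then show ?thesis using \<delta>(1) by blast
qed

end



context mainctx begin

lemma R1:
  assumes x0: "x0 \<in> closure V" and T: "T > 0"
  shows "phi x0 T \<in> interior V"
proof -
  obtain \<delta> where d: "\<delta> > 0" and H: "\<forall>x y. norm (x - x0) < \<delta> \<longrightarrow> norm (y - x) < \<delta> \<longrightarrow> y \<in> V \<longrightarrow> phi x T \<in> V"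
    using robust_reach[OF T, of x0] by blast
  obtain y where yV: "y \<in> V" and yd: "dist y x0 < \<delta> / 2"
    using x0 d unfolding closure_approachable using half_gt_zero by blast
  have ball: "phi x T \<in> V" if "x \<in> ball x0 (\<delta> / 2)" for x
  proof -
    have a: "norm (x - x0) < \<delta> / 2" using that by (simp add: dist_norm norm_minus_commute)
    have "norm (y - x) \<le> norm (y - x0) + norm (x - x0)"
      using norm_triangle_ineq4[of "y - x0" "x - x0"] by simp
    then have "norm (y - x) < \<delta>" using a yd by (simp add: dist_norm)
    moreover have "norm (x - x0) < \<delta>" using a d by simp
    ultimately show ?thesis using H yV by blast
  qed
  define Ob where "Ob = (\<lambda>z. phi z (-T)) -` ball x0 (\<delta> / 2)"
  have "open Ob" unfolding Ob_def
    by (intro open_vimage open_ball continuous_at_imp_continuous_on ballI cont_x)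
  moreover have "phi x0 T \<in> Ob" unfolding Ob_def using d by (simp add: group)
  moreover have "Ob \<subseteq> V"
  proof
    fix z assume "z \<in> Ob"
    then have "phi (phi z (-T)) T \<in> V" using ball unfolding Ob_def by auto
    then show "z \<in> V" by (simp add: group)
  qed
  ultimately show ?thesis by (meson interiorI)
qed

lemma Bprops:
  assumes q: "q \<in> frontier (closure V)"
  shows "q \<in> closure V" "q \<notin> interior (closure V)"
    "s > 0 \<Longrightarrow> phi q s \<in> interior (closure V)"
    "s < 0 \<Longrightarrow> phi q s \<notin> closure V"
proof -
  show qC: "q \<in> closure V" using q frontier_subset_closed[of "closure V"] by auto
  show qI: "q \<notin> interior (closure V)" using q by (simp add: frontier_def)
  have ii: "interior V \<subseteq> interior (closure V)" by (simp add: interior_mono closure_subset)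
  show "s > 0 \<Longrightarrow> phi q s \<in> interior (closure V)" using R1[OF qC] ii by blast
  show "phi q s \<notin> closure V" if s: "s < 0"
  proof
    assume "phi q s \<in> closure V"
    then have "phi (phi q s) (-s) \<in> interior V" using R1 s by simp
    then have "q \<in> interior V" by (simp add: group)
    then have "q \<in> interior (closure V)" using ii by blast
    then show False using qI by simp
  qed
qed

lemma hitB:
  assumes q: "q \<in> frontier (closure V)"
  shows "phi q s \<in> frontier (closure V) \<longleftrightarrow> s = 0"
proof
  assume h: "phi q s \<in> frontier (closure V)"
  have "phi q s \<in> closure V" "phi q s \<notin> interior (closure V)"
    using Bprops(1,2)[OF h] by auto
  then show "s = 0" using Bprops(3,4)[OF q, of s] by (metis linorder_neqE_linordered_idom)
qed (use q in simp)

lemma nu_eq: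
  assumes q: "q \<in> frontier (closure V)"
  shows "nu phi V (phi q a) = a"
proof -
  have "(THE t. phi (phi q a) t \<in> frontier (closure V)) = -a"
  proof (rule the_equality)
    show "phi (phi q a) (-a) \<in> frontier (closure V)" using q by (simp add: group)
    fix t assume "phi (phi q a) t \<in> frontier (closure V)"
    then have "a + t = 0" using hitB[OF q] by (simp add: group)
    then show "t = -a" by simp
  qed
  then show ?thesis by (simp add: nu_def)
qed

end



context mainctx begin

lemma sgn_int:
  assumes q: "q \<in> frontier (closure V)" and h: "phi q s \<in> interior (closure V)"
  shows "s > 0"
proof (rule ccontr)
  assume "\<not> s > 0"
  then consider "s = 0" | "s < 0" by linarith
  then show False
  proof cases
    case 1 then show False using h Bprops(2)[OF q] by simp
  next
    case 2 then show False using h Bprops(4)[OF q 2] interior_subset by blast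
  qed
qed

lemma sgn_out:
  assumes q: "q \<in> frontier (closure V)" and h: "phi q s \<notin> closure V"
  shows "s < 0"
proof (rule ccontr)
  assume "\<not> s < 0"
  then consider "s = 0" | "s > 0" by linarith
  then show False
  proof cases
    case 1 then show False using h Bprops(1)[OF q] by simp
  next
    case 2 then show False using h Bprops(3)[OF q 2] interior_subset by blast
  qed
qed

lemma main:
  "\<exists>W. open W \<and> frontier (closure V) \<subseteq> W \<and>
           W \<subseteq> flow_reach phi (frontier (closure V)) \<and> continuous_on W (nu phi V)"
proof -
  define W where "W = {x. phi x (-1) \<in> - closure V \<and> phi x 1 \<in> interior (closure V)}"
  have cont1: "continuous_on UNIV (\<lambda>x. phi x t)" for t
    by (intro continuous_at_imp_continuous_on ballI cont_x)
  have oW: "open W"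
  proof -
    have "W = (\<lambda>x. phi x (-1)) -` (- closure V) \<inter> (\<lambda>x. phi x 1) -` interior (closure V)"
      unfolding W_def by auto
    then show ?thesis
      by (simp add: open_Int open_vimage cont1 open_Compl)
  qed
  have BW: "frontier (closure V) \<subseteq> W"
  proof
    fix q assume q: "q \<in> frontier (closure V)"
    have "phi q (-1) \<notin> closure V" by (rule Bprops(4)[OF q]) simp
    moreover have "phi q 1 \<in> interior (closure V)" by (rule Bprops(3)[OF q]) simp
    ultimately show "q \<in> W" unfolding W_def by simp
  qed
  have WR: "\<exists>q a. q \<in> frontier (closure V) \<and> x = phi q a" if x: "x \<in> W" for x
  proof -
    define P where "P = (\<lambda>t. phi x t) ` {-1..1}"
    have "connected P" unfolding P_def
      by (intro connected_continuous_image continuous_on_subset[OF cont_t]) auto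
    moreover have "P \<inter> closure V \<noteq> {}"
    proof -
      have "phi x 1 \<in> P" unfolding P_def by auto
      moreover have "phi x 1 \<in> closure V" using x interior_subset unfolding W_def by blast
      ultimately show ?thesis by blast
    qed
    moreover have "P - closure V \<noteq> {}"
    proof -
      have "phi x (-1) \<in> P" unfolding P_def by auto
      moreover have "phi x (-1) \<notin> closure V" using x unfolding W_def by blast
      ultimately show ?thesis by blast
    qed
    ultimately have "P \<inter> frontier (closure V) \<noteq> {}" by (rule connected_Int_frontier)
    then obtain t where t: "phi x t \<in> frontier (closure V)" unfolding P_def by auto
    have "x = phi (phi x t) (-t)" by (simp add: group)
    then show ?thesis using t by blast
  qed
  have sub: "W \<subseteq> flow_reach phi (frontier (closure V))"
    unfolding flow_reach_def using WR by blast
  have "isCont (nu phi V) x0" if x0: "x0 \<in> W" for x0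
  proof -
    obtain q a where q: "q \<in> frontier (closure V)" and xq: "x0 = phi q a" using WR[OF x0] by blast
    have nx0: "nu phi V x0 = a" using nu_eq[OF q] xq by simp
    have "\<forall>e>0. eventually (\<lambda>x. dist (nu phi V x) (nu phi V x0) < e) (at x0)"
    proof (intro allI impI)
      fix e :: real assume e: "e > 0"
      have ev1: "eventually (\<lambda>x. x \<in> W) (at x0)" by (rule eventually_at_in_open'[OF oW x0])
      have "phi x0 (-a + e) = phi q e" using xq by (simp add: group)
      then have "phi x0 (-a + e) \<in> interior (closure V)" using Bprops(3)[OF q e] by simp
      then have ev2: "eventually (\<lambda>x. phi x (-a + e) \<in> interior (closure V)) (at x0)"
        using cont_x[of x0 "-a + e"] unfolding isCont_def
        by (intro topological_tendstoD) auto
      have "phi x0 (-a - e) = phi q (-e)" using xq by (simp add: group)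
      then have "phi x0 (-a - e) \<in> - closure V" using Bprops(4)[OF q, of "-e"] e by simp
      then have ev3: "eventually (\<lambda>x. phi x (-a - e) \<in> - closure V) (at x0)"
        using cont_x[of x0 "-a - e"] unfolding isCont_def
        by (intro topological_tendstoD) auto
      show "eventually (\<lambda>x. dist (nu phi V x) (nu phi V x0) < e) (at x0)"
        using eventually_conj[OF ev1 eventually_conj[OF ev2 ev3]]
      proof (rule eventually_mono)
        fix x assume hx: "x \<in> W \<and> phi x (-a + e) \<in> interior (closure V) \<and> phi x (-a - e) \<in> - closure V"
        obtain q' b where q': "q' \<in> frontier (closure V)" and xq': "x = phi q' b" using WR hx by blast
        have "phi q' (b + (-a + e)) \<in> interior (closure V)" using hx xq' by (simp add: group)
        then have 1: "b + (-a + e) > 0" by (rule sgn_int[OF q'])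
        have "phi q' (b + (-a - e)) \<notin> closure V" using hx xq' by (simp add: group)
        then have 2: "b + (-a - e) < 0" by (rule sgn_out[OF q'])
        have "nu phi V x = b" using nu_eq[OF q'] xq' by simp
        then show "dist (nu phi V x) (nu phi V x0) < e" using nx0 1 2 by (simp add: dist_real_def abs_less_iff)
      qed
    qed
    then show ?thesis unfolding isCont_def tendsto_iff by blast
  qed
  then have "continuous_on W (nu phi V)" using continuous_on_eq_continuous_at[OF oW] by blast
  then show ?thesis using oW BW sub by blast
qed

end


theorem lemma3:
  fixes f :: "real^'n \<Rightarrow> real^'n" and phi :: "real^'n \<Rightarrow> real \<Rightarrow> real^'n"
    and I U V :: "(real^'n) set" and mu :: real
  assumes "smooth_fun f"
    and "is_flow f phi"
    and "robustly_safe f I U mu"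
    and "closure I \<inter> closure U = {}"
    and "bounded (UNIV - U)"
    and "robust_certificate f I U mu V"
  shows "\<exists>W. open W \<and> frontier (closure V) \<subseteq> W \<and>
           W \<subseteq> flow_reach phi (frontier (closure V)) \<and> continuous_on W (nu phi V)"
proof -
  have mu: "mu > 0" using assms(3) unfolding robustly_safe_def by blast
  have inv: "reach_eps f mu V \<subseteq> V" using assms(6) unfolding robust_certificate_def by blast
  interpret mainctx f phi V mu
    by unfold_locales (use assms(1,2) mu inv in auto)
  show ?thesis by (rule main)
qed

end
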